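(* Let $d\ge 8$ be an even integer and let $B$ be a bubble gadget properly attached to $S$ in a graph $G$. Let $H$ be a $(d+1)$-diverse induced subgraph of $G$ such that at least one vertex of the top row of $B$, or at least two vertices of the rightmost column of $B$, have no neighbor in $V(H)\setminus V(B)$. Then $H$ contains at most one vertex of $B$.
   Context: Two distinct vertices $u,v$ of a graph $H$ are $d$-twins in $H$ if $|(N_H(u)\setminus N_H[v])\cup(N_H(v)\setminus N_H[u])|\le d$. A graph is $(d+1)$-diverse if it has at least two vertices and no pair of $d$-twins. The $a\times b$ rook graph has vertex set $\{(i,j): i\in[a], j\in[b]\}$, two distinct vertices adjacent iff they agree in some coordinate; view it as a grid with rows and columns. A bubble gadget $B$ (for $d$) is the $w\times w$ rook graph with $w=d/2+2$, minus the two rightmost vertices of its top row (so the top row has $d/2$ vertices and the rightmost column has $d/2+1$ vertices). If $B$ is an induced subgraph of $G$ and $S$ is the set of vertices outside $V(B)$ with a neighbor in $V(B)$, then $B$ is properly attached to $S$ in $G$ if every vertex of the top row and of the rightmost column of $B$ has one or two neighbors in $V(G)\setminus V(B)$, while every other vertex of $B$ has no neighbor outside $V(B)$. *)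

theory Defs
  imports Main
begin

definition graph :: "'a set \<Rightarrow> ('a \<Rightarrow> 'a \<Rightarrow> bool) \<Rightarrow> bool" where
  "graph V E \<longleftrightarrow> finite V \<and> (\<forall>u v. E u v \<longrightarrow> u \<in> V \<and> v \<in> V)
      \<and> (\<forall>u v. E u v \<longrightarrow> E v u) \<and> (\<forall>u. \<not> E u u)"

definition nbh :: "('a \<Rightarrow> 'a \<Rightarrow> bool) \<Rightarrow> 'a set \<Rightarrow> 'a \<Rightarrow> 'a set" where
  "nbh E X u = {x \<in> X. E u x}"

definition cnbh :: "('a \<Rightarrow> 'a \<Rightarrow> bool) \<Rightarrow> 'a set \<Rightarrow> 'a \<Rightarrow> 'a set" where
  "cnbh E X u = insert u (nbh E X u)"

definition d_twins :: "('a \<Rightarrow> 'a \<Rightarrow> bool) \<Rightarrow> 'a set \<Rightarrow> nat \<Rightarrow> 'a \<Rightarrow> 'a \<Rightarrow> bool" where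
  "d_twins E X d u v \<longleftrightarrow> u \<in> X \<and> v \<in> X \<and> u \<noteq> v \<and>
     card ((nbh E X u - cnbh E X v) \<union> (nbh E X v - cnbh E X u)) \<le> d"

definition diverse :: "('a \<Rightarrow> 'a \<Rightarrow> bool) \<Rightarrow> 'a set \<Rightarrow> nat \<Rightarrow> bool" where
  "diverse E X k \<longleftrightarrow> card X \<ge> 2 \<and> \<not> (\<exists>u v. d_twins E X (k - 1) u v)"

text \<open>Rook graph adjacency on coordinates (row, column).\<close>
definition rook_adj :: "nat \<times> nat \<Rightarrow> nat \<times> nat \<Rightarrow> bool" where
  "rook_adj p q \<longleftrightarrow> p \<noteq> q \<and> (fst p = fst q \<or> snd p = snd q)"

text \<open>Bubble gadget coordinates for d: rows 1..w (row 1 is the top row), columns 1..w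
  (column w is the rightmost), w = d/2+2, minus the two rightmost vertices of the top row.\<close>
definition bubble_w :: "nat \<Rightarrow> nat" where
  "bubble_w d = d div 2 + 2"

definition bubble_coords :: "nat \<Rightarrow> (nat \<times> nat) set" where
  "bubble_coords d = ({1..bubble_w d} \<times> {1..bubble_w d}) - {(1, bubble_w d - 1), (1, bubble_w d)}"

definition bubble_top :: "nat \<Rightarrow> (nat \<times> nat) set" where
  "bubble_top d = {(1, j) | j. j \<in> {1..bubble_w d - 2}}"

definition bubble_right :: "nat \<Rightarrow> (nat \<times> nat) set" where
  "bubble_right d = {(i, bubble_w d) | i. i \<in> {2..bubble_w d}}"

definition bubble_in :: "nat \<Rightarrow> 'a set \<Rightarrow> ('a \<Rightarrow> 'a \<Rightarrow> bool) \<Rightarrow> (nat \<times> nat \<Rightarrow> 'a) \<Rightarrow> bool" where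
  "bubble_in d V E f \<longleftrightarrow> inj_on f (bubble_coords d) \<and> f ` bubble_coords d \<subseteq> V \<and>
     (\<forall>p\<in>bubble_coords d. \<forall>q\<in>bubble_coords d. E (f p) (f q) \<longleftrightarrow> rook_adj p q)"

definition attach_set :: "nat \<Rightarrow> 'a set \<Rightarrow> ('a \<Rightarrow> 'a \<Rightarrow> bool) \<Rightarrow> (nat \<times> nat \<Rightarrow> 'a) \<Rightarrow> 'a set" where
  "attach_set d V E f = {x \<in> V - f ` bubble_coords d. \<exists>b\<in>f ` bubble_coords d. E x b}"

definition properly_attached ::
  "nat \<Rightarrow> 'a set \<Rightarrow> ('a \<Rightarrow> 'a \<Rightarrow> bool) \<Rightarrow> (nat \<times> nat \<Rightarrow> 'a) \<Rightarrow> 'a set \<Rightarrow> bool" where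
  "properly_attached d V E f S \<longleftrightarrow> bubble_in d V E f \<and> S = attach_set d V E f \<and>
     (\<forall>p\<in>bubble_top d \<union> bubble_right d.
        card (nbh E (V - f ` bubble_coords d) (f p)) \<in> {1, 2}) \<and>
     (\<forall>p\<in>bubble_coords d - (bubble_top d \<union> bubble_right d).
        nbh E (V - f ` bubble_coords d) (f p) = {})"

end

theory Submission
  imports Defs
begin

locale bub =
  fixes d :: nat and V :: "'a set" and E :: "'a \<Rightarrow> 'a \<Rightarrow> bool"
    and f :: "nat \<times> nat \<Rightarrow> 'a" and S H :: "'a set"
  assumes ev: "even d" and d8: "d \<ge> 8"
    and gr: "graph V E"
    and pa: "properly_attached d V E f S"
    and HV: "H \<subseteq> V"
    and dv: "diverse E H (d + 1)"
begin

definition "w = bubble_w d"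
abbreviation "B \<equiv> bubble_coords d"
definition "X = {p \<in> B. f p \<in> H}"
definition "ob p = card (nbh E (H - f ` B) (f p))"
definition "rowX i = {p\<in>X. fst p = i}"
definition "colX j = {p\<in>X. snd p = j}"
definition "DD u v = card ((nbh E H (f u) - cnbh E H (f v)) \<union> (nbh E H (f v) - cnbh E H (f u)))"
definition "Xn u v = {p\<in>X. rook_adj u p \<and> \<not> rook_adj v p \<and> p \<noteq> v}"

lemma d_eq: "d = 2*w - 4" "w \<ge> 6"
  using ev d8 unfolding w_def bubble_w_def by auto

lemma B_mem: "(i,j) \<in> B \<longleftrightarrow> 1 \<le> i \<and> i \<le> w \<and> 1 \<le> j \<and> j \<le> w \<and> \<not>(i = 1 \<and> j \<ge> w - 1)"
  unfolding bubble_coords_def w_def by auto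

lemma finB: "finite B" unfolding bubble_coords_def by auto
lemma finX: "finite X" using finB unfolding X_def by auto
lemma XB: "X \<subseteq> B" unfolding X_def by auto

lemma binj: "inj_on f B" and badj: "p \<in> B \<Longrightarrow> q \<in> B \<Longrightarrow> E (f p) (f q) \<longleftrightarrow> rook_adj p q"
  using pa unfolding properly_attached_def bubble_in_def by auto

lemma finV: "finite V" using gr unfolding graph_def by auto

lemma TF: assumes "u \<in> X" "v \<in> X" "u \<noteq> v" shows "DD u v > d"
proof -
  have "f u \<noteq> f v" using assms binj XB by (meson inj_onD subsetD)
  moreover have "f u \<in> H" "f v \<in> H" using assms unfolding X_def by auto
  ultimately show ?thesis using dv unfolding diverse_def d_twins_def DD_def by force
qed

lemma ob_le2: assumes "p \<in> B" shows "ob p \<le> 2"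
proof -
  have fin: "finite (nbh E (V - f ` B) (f p))" using finV unfolding nbh_def by auto
  have sub: "nbh E (H - f ` B) (f p) \<subseteq> nbh E (V - f ` B) (f p)" using HV unfolding nbh_def by auto
  have "card (nbh E (V - f ` B) (f p)) \<le> 2"
  proof (cases "p \<in> bubble_top d \<union> bubble_right d")
    case True
    hence "card (nbh E (V - f ` B) (f p)) \<in> {1, 2}" using pa unfolding properly_attached_def by blast
    thus ?thesis by auto
  next
    case False thus ?thesis using pa assms unfolding properly_attached_def by auto
  qed
  thus ?thesis unfolding ob_def using card_mono[OF fin sub] by linarith
qed

lemma ob_0: assumes "p \<in> B" "fst p \<noteq> 1" "snd p \<noteq> w" shows "ob p = 0"
proof -
  have "p \<notin> bubble_top d \<union> bubble_right d"
    using assms unfolding bubble_top_def bubble_right_def w_def by auto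
  hence "nbh E (V - f ` B) (f p) = {}" using pa assms unfolding properly_attached_def by auto
  hence "nbh E (H - f ` B) (f p) = {}" using HV unfolding nbh_def by auto
  thus ?thesis unfolding ob_def by simp
qed

lemma KEY: assumes "u \<in> X" "v \<in> X" "u \<noteq> v"
  shows "DD u v \<le> card (Xn u v) + card (Xn v u) + ob u + ob v"
proof -
  let ?T = "(nbh E H (f u) - cnbh E H (f v)) \<union> (nbh E H (f v) - cnbh E H (f u))"
  have sub: "?T \<subseteq> (f ` Xn u v \<union> f ` Xn v u) \<union> (nbh E (H - f ` B) (f u) \<union> nbh E (H - f ` B) (f v))"
  proof
    fix z assume z: "z \<in> ?T"
    show "z \<in> (f ` Xn u v \<union> f ` Xn v u) \<union> (nbh E (H - f ` B) (f u) \<union> nbh E (H - f ` B) (f v))"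
    proof (cases "z \<in> f ` B")
      case True
      then obtain p where p: "p \<in> B" "z = f p" by auto
      have pX: "p \<in> X" using z p unfolding X_def nbh_def cnbh_def by auto
      have uB: "u \<in> B" "v \<in> B" using assms XB by auto
      show ?thesis using z p pX badj[OF uB(1) p(1)] badj[OF uB(2) p(1)]
        unfolding Xn_def nbh_def cnbh_def by auto
    next
      case False
      then show ?thesis using z unfolding nbh_def cnbh_def by auto
    qed
  qed
  have fin: "finite ((f ` Xn u v \<union> f ` Xn v u) \<union> (nbh E (H - f ` B) (f u) \<union> nbh E (H - f ` B) (f v)))"
    using finX finV HV unfolding Xn_def nbh_def by (auto intro: finite_subset)
  have "DD u v \<le> card ((f ` Xn u v \<union> f ` Xn v u) \<union> (nbh E (H - f ` B) (f u) \<union> nbh E (H - f ` B) (f v)))"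
    unfolding DD_def by (rule card_mono[OF fin sub])
  also have "\<dots> \<le> card (f ` Xn u v \<union> f ` Xn v u) + card (nbh E (H - f ` B) (f u) \<union> nbh E (H - f ` B) (f v))"
    by (rule card_Un_le)
  also have "\<dots> \<le> card (f ` Xn u v) + card (f ` Xn v u) + (ob u + ob v)"
    unfolding ob_def using card_Un_le add_mono by blast
  also have "\<dots> \<le> card (Xn u v) + card (Xn v u) + (ob u + ob v)"
  proof -
    have "finite (Xn u v)" "finite (Xn v u)" using finX unfolding Xn_def by auto
    thus ?thesis using card_image_le by (meson add_mono le_refl)
  qed
  finally show ?thesis by simp
qed

lemma finrow: "finite (rowX i)" and fincol: "finite (colX j)"
  using finX unfolding rowX_def colX_def by auto

lemma row_sub: "rowX i \<subseteq> Pair i ` {1..w}"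
proof
  fix p assume "p \<in> rowX i"
  then obtain a b where p: "p = (a,b)" "(a,b) \<in> B" "a = i" unfolding rowX_def X_def by (cases p) auto
  thus "p \<in> Pair i ` {1..w}" using B_mem by auto
qed

lemma row1_sub: "rowX 1 \<subseteq> Pair 1 ` {1..w-2}"
proof
  fix p assume "p \<in> rowX 1"
  then obtain a b where p: "p = (a,b)" "(a,b) \<in> B" "a = 1" unfolding rowX_def X_def by (cases p) auto
  thus "p \<in> Pair 1 ` {1..w-2}" using B_mem[of a b] by auto
qed

lemma col_sub: "colX j \<subseteq> (\<lambda>i. (i,j)) ` {1..w}"
proof
  fix p assume "p \<in> colX j"
  then obtain a b where p: "p = (a,b)" "(a,b) \<in> B" "b = j" unfolding colX_def X_def by (cases p) auto
  thus "p \<in> (\<lambda>i. (i,j)) ` {1..w}" using B_mem by auto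
qed

lemma colr_sub: assumes "j \<ge> w - 1" shows "colX j \<subseteq> (\<lambda>i. (i,j)) ` {2..w}"
proof
  fix p assume "p \<in> colX j"
  then obtain a b where p: "p = (a,b)" "(a,b) \<in> B" "b = j" unfolding colX_def X_def by (cases p) auto
  thus "p \<in> (\<lambda>i. (i,j)) ` {2..w}" using B_mem[of a b] assms by auto
qed

lemma card_img_row: "card (Pair i ` A) = card A"
  by (rule card_image) (auto simp: inj_on_def)
lemma card_img_col: "card ((\<lambda>i. (i,j)) ` A) = card A"
  by (rule card_image) (auto simp: inj_on_def)

lemma row_le: "card (rowX i) \<le> w"
  using card_mono[OF _ row_sub, of i] card_img_row[of i "{1..w}"] by simp
lemma row1_le: "card (rowX 1) \<le> w - 2"
proof -
  have "card (rowX 1) \<le> card (Pair (1::nat) ` {1..w-2})" by (rule card_mono[OF _ row1_sub]) simp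
  also have "\<dots> = card {1..w-2}" by (rule card_img_row)
  finally show ?thesis by simp
qed
lemma col_le: "card (colX j) \<le> w"
  using card_mono[OF _ col_sub, of j] card_img_col[of j "{1..w}"] by simp
lemma colr_le: "j \<ge> w - 1 \<Longrightarrow> card (colX j) \<le> w - 1"
  using card_mono[OF _ colr_sub, of j] card_img_col[of j "{2..w}"] by simp

lemma row_full: assumes "card (rowX i) \<ge> w" "1 \<le> j" "j \<le> w" shows "(i,j) \<in> X"
proof -
  have "rowX i = Pair i ` {1..w}"
    using card_seteq[OF _ row_sub, of i] card_img_row[of i "{1..w}"] assms by simp
  moreover have "(i,j) \<in> Pair i ` {1..w}" using assms by auto
  ultimately show ?thesis unfolding rowX_def by blast
qed

lemma col_full: assumes "card (colX j) \<ge> w" "1 \<le> i" "i \<le> w" shows "(i,j) \<in> X"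
proof -
  have "colX j = (\<lambda>i. (i,j)) ` {1..w}"
    using card_seteq[OF _ col_sub, of j] card_img_col[of j "{1..w}"] assms by simp
  moreover have "(i,j) \<in> (\<lambda>i. (i,j)) ` {1..w}" using assms by auto
  ultimately show ?thesis unfolding colX_def by blast
qed

lemma rowpair: assumes "u \<in> X" "v \<in> X" "fst u = fst v" "u \<noteq> v"
  shows "DD u v + 2 \<le> card (colX (snd u)) + card (colX (snd v)) + ob u + ob v"
proof -
  have s1: "Xn u v \<subseteq> colX (snd u) - {u}" using assms unfolding Xn_def colX_def rook_adj_def by auto
  have s2: "Xn v u \<subseteq> colX (snd v) - {v}" using assms unfolding Xn_def colX_def rook_adj_def by auto
  have c1: "card (Xn u v) + 1 \<le> card (colX (snd u))"
    using card_mono[OF _ s1] fincol card_Diff_singleton[of u "colX (snd u)"] assms(1)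
      card_gt_0_iff[of "colX (snd u)"] unfolding colX_def by fastforce
  have c2: "card (Xn v u) + 1 \<le> card (colX (snd v))"
    using card_mono[OF _ s2] fincol card_Diff_singleton[of v "colX (snd v)"] assms(2)
      card_gt_0_iff[of "colX (snd v)"] unfolding colX_def by fastforce
  show ?thesis using KEY[OF assms(1,2,4)] c1 c2 by linarith
qed

lemma colpair: assumes "u \<in> X" "v \<in> X" "snd u = snd v" "u \<noteq> v"
  shows "DD u v + 2 \<le> card (rowX (fst u)) + card (rowX (fst v)) + ob u + ob v"
proof -
  have s1: "Xn u v \<subseteq> rowX (fst u) - {u}" using assms unfolding Xn_def rowX_def rook_adj_def by auto
  have s2: "Xn v u \<subseteq> rowX (fst v) - {v}" using assms unfolding Xn_def rowX_def rook_adj_def by auto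
  have c1: "card (Xn u v) + 1 \<le> card (rowX (fst u))"
    using card_mono[OF _ s1] finrow card_Diff_singleton[of u "rowX (fst u)"] assms(1)
      card_gt_0_iff[of "rowX (fst u)"] unfolding rowX_def by fastforce
  have c2: "card (Xn v u) + 1 \<le> card (rowX (fst v))"
    using card_mono[OF _ s2] finrow card_Diff_singleton[of v "rowX (fst v)"] assms(2)
      card_gt_0_iff[of "rowX (fst v)"] unfolding rowX_def by fastforce
  show ?thesis using KEY[OF assms(1,2,4)] c1 c2 by linarith
qed

lemma XB': "(i,j) \<in> X \<Longrightarrow> (i,j) \<in> B" using XB by auto

definition "SP \<longleftrightarrow> (\<exists>a. 1 \<le> a \<and> a \<le> w-2 \<and> ob (1,a) = 0) \<or>
  (\<exists>pi qi. 2\<le>pi \<and> pi\<le>w \<and> 2\<le>qi \<and> qi\<le>w \<and> pi\<noteq>qi \<and> ob (pi,w) = 0 \<and> ob (qi,w) = 0)"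

lemma rows_big: assumes "(i,j) \<in> X" "(i',j) \<in> X" "i \<noteq> i'" "i \<ge> 2" "i' \<ge> 2" "j \<noteq> w"
  shows "card (rowX i) + card (rowX i') \<ge> 2*w - 1"
proof -
  have o: "ob (i,j) = 0" "ob (i',j) = 0" using ob_0 XB' assms by auto
  have "DD (i,j) (i',j) + 2 \<le> card (rowX i) + card (rowX i')"
    using colpair[OF assms(1,2)] assms o by simp
  moreover have "DD (i,j) (i',j) > d" using TF assms by auto
  ultimately show ?thesis using d_eq by linarith
qed

lemma cols_big: assumes "(i,j) \<in> X" "(i,j') \<in> X" "j \<noteq> j'" "i \<ge> 2" "j \<noteq> w" "j' \<noteq> w"
  shows "card (colX j) + card (colX j') \<ge> 2*w - 1"
proof -
  have o: "ob (i,j) = 0" "ob (i,j') = 0" using ob_0 XB' assms by auto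
  have "DD (i,j) (i,j') + 2 \<le> card (colX j) + card (colX j')"
    using rowpair[OF assms(1,2)] assms o by simp
  moreover have "DD (i,j) (i,j') > d" using TF assms by auto
  ultimately show ?thesis using d_eq by linarith
qed

lemma full_row_exists: assumes "\<And>i i'. 2 \<le> i \<Longrightarrow> i \<le> w \<Longrightarrow> 2 \<le> i' \<Longrightarrow> i' \<le> w \<Longrightarrow> i \<noteq> i'
      \<Longrightarrow> card (rowX i) + card (rowX i') \<ge> 2*w - 1"
    and "2 \<le> i" "i \<le> w" "2 \<le> i'" "i' \<le> w" "i \<noteq> i'"
  shows "card (rowX i) \<ge> w \<or> card (rowX i') \<ge> w"
  using assms(1)[OF assms(2-6)] row_le[of i] row_le[of i'] d_eq by linarith

lemma S1: assumes SP "(i,j) \<in> X" "(i,j') \<in> X" "j \<noteq> j'" "i \<ge> 2" "j \<le> w - 1" "j' \<le> w - 1"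
  shows False
proof -
  have w6: "w \<ge> 6" using d_eq by simp
  have jj: "j \<noteq> w" "j' \<noteq> w" "j \<ge> 1" "j' \<ge> 1" using assms w6 XB' B_mem by auto
  have cb: "card (colX j) + card (colX j') \<ge> 2*w - 1" using cols_big[OF assms(2-5) jj(1,2)] .
  obtain j0 where j0: "1 \<le> j0" "j0 \<le> w - 2" "card (colX j0) \<ge> w"
  proof -
    have "card (colX j) \<le> w - 1 \<or> (j \<le> w - 2 \<and> card (colX j) \<ge> w)"
      using colr_le[of j] col_le[of j] by linarith
    moreover have "card (colX j') \<le> w - 1 \<or> (j' \<le> w - 2 \<and> card (colX j') \<ge> w)"
      using colr_le[of j'] col_le[of j'] by linarith
    ultimately show ?thesis
    proof (elim disjE)
      assume "card (colX j) \<le> w - 1" "card (colX j') \<le> w - 1"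
      thus ?thesis using cb w6 by linarith
    qed (use that jj in auto)
  qed
  have colfull: "\<And>i. 1 \<le> i \<Longrightarrow> i \<le> w \<Longrightarrow> (i,j0) \<in> X" using col_full j0 by auto
  have RB: "\<And>i i'. 2 \<le> i \<Longrightarrow> i \<le> w \<Longrightarrow> 2 \<le> i' \<Longrightarrow> i' \<le> w \<Longrightarrow> i \<noteq> i'
      \<Longrightarrow> card (rowX i) + card (rowX i') \<ge> 2*w - 1"
  proof -
    fix i i' assume h: "2 \<le> i" "i \<le> w" "2 \<le> i'" "i' \<le> w" "i \<noteq> i'"
    have "(i,j0) \<in> X" "(i',j0) \<in> X" using colfull h by auto
    moreover have "j0 \<noteq> w" using j0 w6 by auto
    ultimately show "card (rowX i) + card (rowX i') \<ge> 2*w - 1" using rows_big h by blast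
  qed
  obtain i1 where i1: "2 \<le> i1" "i1 \<le> w" "card (rowX i1) \<ge> w"
  proof -
    have "card (rowX 2) \<ge> w \<or> card (rowX 3) \<ge> w" using full_row_exists[OF RB, of 2 3] w6 by auto
    thus thesis
    proof
      assume "card (rowX 2) \<ge> w" thus thesis using that[of 2] w6 by auto
    next
      assume "card (rowX 3) \<ge> w" thus thesis using that[of 3] w6 by auto
    qed
  qed
  have rowfull: "\<And>j. 1 \<le> j \<Longrightarrow> j \<le> w \<Longrightarrow> (i1,j) \<in> X" using row_full i1 by auto
  from assms(1) show False unfolding SP_def
  proof
    assume "\<exists>a. 1 \<le> a \<and> a \<le> w-2 \<and> ob (1,a) = 0"
    then obtain a where a: "1 \<le> a" "a \<le> w-2" "ob (1,a) = 0" by auto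
    have "card (colX a) + card (colX (w-1)) \<ge> 2*w - 1"
      using cols_big[OF rowfull rowfull, of a "w-1"] a w6 i1 by auto
    hence ya: "card (colX a) \<ge> w" using colr_le[of "w-1"] by linarith
    have X1: "(1,a) \<in> X" "(2,a) \<in> X" using col_full[OF ya] w6 by auto
    have "DD (1,a) (2,a) + 2 \<le> card (rowX 1) + card (rowX 2) + ob (1,a) + ob (2,a)"
      using colpair[OF X1] by simp
    moreover have "ob (2,a) = 0" using ob_0 X1 XB' a w6 by auto
    moreover have "DD (1,a) (2,a) > d" using TF X1 by auto
    ultimately show False using row1_le row_le[of 2] a d_eq by linarith
  next
    assume "\<exists>pi qi. 2\<le>pi \<and> pi\<le>w \<and> 2\<le>qi \<and> qi\<le>w \<and> pi\<noteq>qi \<and> ob (pi,w) = 0 \<and> ob (qi,w) = 0"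
    then obtain pi qi where pq: "2\<le>pi" "pi\<le>w" "2\<le>qi" "qi\<le>w" "pi\<noteq>qi" "ob (pi,w) = 0" "ob (qi,w) = 0"
      by auto
    obtain r where r: "2 \<le> r" "r \<le> w" "ob (r,w) = 0" "card (rowX r) \<ge> w"
      using full_row_exists[OF RB pq(1-5)] pq by auto
    have Xr: "(r,w) \<in> X" "(r,w-1) \<in> X" using row_full[OF r(4)] w6 by auto
    have "DD (r,w) (r,w-1) + 2 \<le> card (colX w) + card (colX (w-1)) + ob (r,w) + ob (r,w-1)"
      using rowpair[OF Xr] w6 by simp
    moreover have "ob (r,w-1) = 0" using ob_0 Xr XB' r w6 by auto
    moreover have "DD (r,w) (r,w-1) > d" using TF Xr w6 by auto
    ultimately show False using colr_le[of w] colr_le[of "w-1"] r d_eq by linarith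
  qed
qed

lemma S2: assumes SP "(i,j) \<in> X" "(i',j) \<in> X" "i \<noteq> i'" "i \<ge> 2" "i' \<ge> 2" "j \<le> w - 1"
  shows False
proof -
  have w6: "w \<ge> 6" using d_eq by simp
  have "i \<le> w" "i' \<le> w" "j \<noteq> w" using assms XB' B_mem w6 by auto
  hence "card (rowX i) + card (rowX i') \<ge> 2*w - 1" using rows_big assms by auto
  hence "card (rowX i) \<ge> w \<or> card (rowX i') \<ge> w" using row_le[of i] row_le[of i'] w6 by linarith
  then obtain r where r: "r \<ge> 2" "card (rowX r) \<ge> w" using assms by auto
  have "(r,1) \<in> X" "(r,2) \<in> X" using row_full[OF r(2)] w6 by auto
  thus False using S1[OF assms(1)] r w6 by force
qed

lemma rowi_le2: assumes SP "i \<ge> 2" shows "card (rowX i) \<le> 2"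
proof -
  let ?A = "{p\<in>X. fst p = i \<and> snd p \<noteq> w}"
  have fA: "finite ?A" using finX by auto
  have "\<forall>p\<in>?A. \<forall>q\<in>?A. p = q"
  proof (intro ballI, rule ccontr)
    fix p q assume p: "p \<in> ?A" and q: "q \<in> ?A" and ne: "p \<noteq> q"
    obtain a b where pab: "p = (a,b)" by (cases p)
    obtain a' b' where qab: "q = (a',b')" by (cases q)
    have "b \<le> w - 1" "b' \<le> w - 1" using p q pab qab XB'[of a b] XB'[of a' b'] B_mem[of a b] B_mem[of a' b'] by auto
    thus False using S1[OF assms(1), of i b b'] p q ne pab qab assms by auto
  qed
  hence "card ?A \<le> 1" using card_le_Suc0_iff_eq[OF fA] by simp
  moreover have "rowX i \<subseteq> insert (i,w) ?A" unfolding rowX_def by auto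
  hence "card (rowX i) \<le> card (insert (i,w) ?A)" using fA by (intro card_mono) auto
  moreover have "card (insert (i,w) ?A) \<le> card ?A + 1" using fA card_insert_le_m1
    by (simp add: card_insert_if)
  ultimately show ?thesis by linarith
qed

lemma colj_le2: assumes SP "j \<noteq> w" shows "card (colX j) \<le> 2"
proof -
  let ?A = "{p\<in>X. snd p = j \<and> fst p \<noteq> 1}"
  have fA: "finite ?A" using finX by auto
  have "\<forall>p\<in>?A. \<forall>q\<in>?A. p = q"
  proof (intro ballI, rule ccontr)
    fix p q assume p: "p \<in> ?A" and q: "q \<in> ?A" and ne: "p \<noteq> q"
    obtain a b where pab: "p = (a,b)" by (cases p)
    obtain a' b' where qab: "q = (a',b')" by (cases q)
    have "a \<ge> 2" "a' \<ge> 2" "j \<le> w - 1" using p q pab qab XB'[of a b] XB'[of a' b'] B_mem[of a b] B_mem[of a' b'] assms by auto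
    thus False using S2[OF assms(1), of a j a'] p q ne pab qab assms by auto
  qed
  hence "card ?A \<le> 1" using card_le_Suc0_iff_eq[OF fA] by simp
  moreover have "colX j \<subseteq> insert (1,j) ?A" unfolding colX_def by auto
  hence "card (colX j) \<le> card (insert (1,j) ?A)" using fA by (intro card_mono) auto
  moreover have "card (insert (1,j) ?A) \<le> card ?A + 1" using fA
    by (simp add: card_insert_if)
  ultimately show ?thesis by linarith
qed

lemma line_pair_twin: assumes SP "p \<in> X" "q \<in> X" "p \<noteq> q" "fst p = fst q \<or> snd p = snd q"
  shows "DD p q \<le> d"
proof -
  have w6: "w \<ge> 6" using d_eq by simp
  obtain a b where pab: "p = (a,b)" by (cases p)
  obtain a' b' where qab: "q = (a',b')" by (cases q)
  have Bp: "(a,b) \<in> B" "(a',b') \<in> B" using assms pab qab XB by auto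
  have ob2: "ob p \<le> 2" "ob q \<le> 2" using ob_le2 Bp pab qab by auto
  from assms(5) show ?thesis
  proof
    assume r: "fst p = fst q"
    have R: "DD p q + 2 \<le> card (colX b) + card (colX b') + ob p + ob q"
      using rowpair[OF assms(2,3) r assms(4)] pab qab by simp
    show ?thesis
    proof (cases "a = 1")
      case True
      hence "b \<noteq> w" "b' \<noteq> w" using Bp B_mem r pab qab w6 by auto
      thus ?thesis using R colj_le2[OF assms(1), of b] colj_le2[OF assms(1), of b'] ob2 d_eq by linarith
    next
      case False
      hence a2: "a \<ge> 2" "a' = a" using Bp B_mem r pab qab by auto
      have "b \<noteq> b'" using assms(4) pab qab a2 by auto
      hence "b = w \<or> b' = w" using S1[OF assms(1), of a b b'] assms(2,3) pab qab a2 Bp B_mem by force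
      thus ?thesis
      proof
        assume bw: "b = w"
        hence "b' \<noteq> w" using \<open>b \<noteq> b'\<close> by auto
        hence "card (colX b') \<le> 2" "ob q = 0" using colj_le2[OF assms(1)] ob_0 Bp qab a2 by auto
        thus ?thesis using R colr_le[of b] bw ob2 d_eq by linarith
      next
        assume bw: "b' = w"
        hence "b \<noteq> w" using \<open>b \<noteq> b'\<close> by auto
        hence "card (colX b) \<le> 2" "ob p = 0" using colj_le2[OF assms(1)] ob_0 Bp pab a2 by auto
        thus ?thesis using R colr_le[of b'] bw ob2 d_eq by linarith
      qed
    qed
  next
    assume c: "snd p = snd q"
    have R: "DD p q + 2 \<le> card (rowX a) + card (rowX a') + ob p + ob q"
      using colpair[OF assms(2,3) c assms(4)] pab qab by simp
    have "a \<noteq> a'" using assms(4) c pab qab by auto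
    show ?thesis
    proof (cases "b = w")
      case True
      hence "a \<ge> 2" "a' \<ge> 2" using Bp B_mem c pab qab w6 by auto
      thus ?thesis using R rowi_le2[OF assms(1), of a] rowi_le2[OF assms(1), of a'] ob2 d_eq by linarith
    next
      case False
      hence bb: "b' = b" "b \<le> w - 1" using Bp B_mem c pab qab by auto
      have "a = 1 \<or> a' = 1"
      proof (rule ccontr)
        assume "\<not> (a = 1 \<or> a' = 1)"
        hence "a \<ge> 2" "a' \<ge> 2" using Bp B_mem by auto
        thus False using S2[OF assms(1), of a b a'] assms(2,3) pab qab bb \<open>a \<noteq> a'\<close> by auto
      qed
      thus ?thesis
      proof
        assume a1: "a = 1"
        hence "a' \<ge> 2" using \<open>a \<noteq> a'\<close> Bp B_mem by auto
        hence "card (rowX a') \<le> 2" "ob q = 0" using rowi_le2[OF assms(1)] ob_0 Bp qab False bb by auto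
        moreover have "card (rowX a) \<le> w - 2" using row1_le a1 by simp
        ultimately show ?thesis using R ob2 d_eq by linarith
      next
        assume a1: "a' = 1"
        hence "a \<ge> 2" using \<open>a \<noteq> a'\<close> Bp B_mem by auto
        hence "card (rowX a) \<le> 2" "ob p = 0" using rowi_le2[OF assms(1)] ob_0 Bp pab False by auto
        moreover have "card (rowX a') \<le> w - 2" using row1_le a1 by simp
        ultimately show ?thesis using R ob2 d_eq by linarith
      qed
    qed
  qed
qed

lemma final: assumes SP "card X \<ge> 2" shows False
proof -
  have w6: "w \<ge> 6" using d_eq by simp
  show False
  proof (cases "\<exists>p\<in>X. \<exists>q\<in>X. p \<noteq> q \<and> (fst p = fst q \<or> snd p = snd q)")
    case True
    then obtain p q where "p \<in> X" "q \<in> X" "p \<noteq> q" "fst p = fst q \<or> snd p = snd q" by auto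
    thus False using line_pair_twin[OF assms(1)] TF by fastforce
  next
    case False
    obtain u v where uv: "u \<in> X" "v \<in> X" "u \<noteq> v"
      using assms(2) by (metis One_nat_def card_le_Suc0_iff_eq finX not_less_eq_eq numeral_2_eq_2)
    have "Xn u v = {}" "Xn v u = {}" using False uv unfolding Xn_def rook_adj_def by blast+
    hence "DD u v \<le> ob u + ob v" using KEY[OF uv] by simp
    moreover have "ob u \<le> 2" "ob v \<le> 2" using ob_le2[of u] ob_le2[of v] uv XB by auto
    ultimately have "DD u v \<le> d" using d_eq by linarith
    thus False using TF[OF uv] by simp
  qed
qed

end

theorem lemma5p3:
  fixes d :: nat and V :: "'a set" and E :: "'a \<Rightarrow> 'a \<Rightarrow> bool"
    and f :: "nat \<times> nat \<Rightarrow> 'a" and S H :: "'a set"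
  assumes "even d" and "d \<ge> 8"
    and "graph V E"
    and "properly_attached d V E f S"
    and "H \<subseteq> V"
    and "diverse E H (d + 1)"
    and "(\<exists>p\<in>bubble_top d. nbh E (H - f ` bubble_coords d) (f p) = {})
         \<or> (\<exists>p\<in>bubble_right d. \<exists>q\<in>bubble_right d. p \<noteq> q \<and>
              nbh E (H - f ` bubble_coords d) (f p) = {} \<and>
              nbh E (H - f ` bubble_coords d) (f q) = {})"
  shows "card (H \<inter> f ` bubble_coords d) \<le> 1"
proof -
  interpret bub d V E f S H using assms(1-6) by unfold_locales
  have eq: "H \<inter> f ` bubble_coords d = f ` X" unfolding X_def by auto
  have cX: "card (H \<inter> f ` bubble_coords d) = card X"
    unfolding eq by (rule card_image[OF inj_on_subset[OF binj XB]])
  have SP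
    using assms(7)
  proof (elim disjE)
    assume "\<exists>p\<in>bubble_top d. nbh E (H - f ` bubble_coords d) (f p) = {}"
    then obtain a where "1 \<le> a" "a \<le> w - 2" "nbh E (H - f ` B) (f (1,a)) = {}"
      unfolding bubble_top_def w_def by auto
    hence "1 \<le> a \<and> a \<le> w-2 \<and> ob (1,a) = 0" unfolding ob_def by simp
    thus ?thesis unfolding SP_def by blast
  next
    assume "\<exists>p\<in>bubble_right d. \<exists>q\<in>bubble_right d. p \<noteq> q \<and>
              nbh E (H - f ` bubble_coords d) (f p) = {} \<and>
              nbh E (H - f ` bubble_coords d) (f q) = {}"
    then obtain pi qi where "2\<le>pi \<and> pi\<le>w \<and> 2\<le>qi \<and> qi\<le>w \<and> pi\<noteq>qi \<and>
       nbh E (H - f ` B) (f (pi,w)) = {} \<and> nbh E (H - f ` B) (f (qi,w)) = {}"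
      unfolding bubble_right_def w_def by auto
    hence "2\<le>pi \<and> pi\<le>w \<and> 2\<le>qi \<and> qi\<le>w \<and> pi\<noteq>qi \<and> ob (pi,w) = 0 \<and> ob (qi,w) = 0"
      unfolding ob_def by simp
    thus ?thesis unfolding SP_def by blast
  qed
  show ?thesis
  proof (rule ccontr)
    assume "\<not> ?thesis"
    hence "card X \<ge> 2" using cX by simp
    thus False using final[OF \<open>SP\<close>] by simp
  qed
qed

end
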